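(* Let $\star$ be a $t$-definer, let $n\ge 1$ and let $(X_1,d_1^\star),\dots,(X_n,d_n^\star)$ be nonempty $\star$-metric spaces, and let $X=\prod_{i=1}^n X_i$. For $x=(x_i)_{i=1}^n$, $y=(y_i)_{i=1}^n\in X$ define $d_T^\star(x,y)=d_1^\star(x_1,y_1)\star d_2^\star(x_2,y_2)\star\cdots\star d_n^\star(x_n,y_n)$ and $d_{\max}^\star(x,y)=\max_{1\le i\le n}d_i^\star(x_i,y_i)$. Then: (1) $(X,d_T^\star)$ is totally bounded if and only if every $(X_i,d_i^\star)$ is totally bounded; (2) $(X,d_{\max}^\star)$ is totally bounded if and only if every $(X_i,d_i^\star)$ is totally bounded.
   Context: A $t$-definer is a function $\star:[0,\infty)\times[0,\infty)\to[0,\infty)$ such that for all $a,b,c\ge 0$: $a\star b=b\star a$; $a\star(b\star c)=(a\star b)\star c$; if $a\le b$ then $a\star c\le b\star c$; $a\star 0=a$; and $\star$ is continuous in its first variable with respect to the Euclidean topology. Given a nonempty set $Y$, a $\star$-metric on $Y$ is a function $\rho:Y\times Y\to[0,\infty)$ such that for all $x,y,z\in Y$: $\rho(x,y)=0$ iff $x=y$; $\rho(x,y)=\rho(y,x)$; and $\rho(x,y)\le \rho(x,z)\star \rho(z,y)$; $(Y,\rho)$ is a $\star$-metric space. Both $d_T^\star$ and $d_{\max}^\star$ are $\star$-metrics on $X$ (with the same $t$-definer $\star$). A $\star$-metric space $(Y,\rho)$ is totally bounded if for every $\epsilon>0$ there is a finite set $F\subseteq Y$ with $Y=\bigcup_{x\in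 F}\{y\in Y:\rho(x,y)<\epsilon\}$. *)

theory Defs
  imports "HOL-Analysis.Analysis"
begin

text \<open>A t-definer: a binary operation on [0,\<infinity>), represented as a real function
  whose behaviour is only constrained on nonnegative arguments.\<close>
definition t_definer :: "(real \<Rightarrow> real \<Rightarrow> real) \<Rightarrow> bool" where
  "t_definer star \<longleftrightarrow>
     (\<forall>a\<ge>0. \<forall>b\<ge>0. star a b \<ge> 0) \<and>
     (\<forall>a\<ge>0. \<forall>b\<ge>0. star a b = star b a) \<and>
     (\<forall>a\<ge>0. \<forall>b\<ge>0. \<forall>c\<ge>0. star a (star b c) = star (star a b) c) \<and>
     (\<forall>a\<ge>0. \<forall>b\<ge>0. \<forall>c\<ge>0. a \<le> b \<longrightarrow> star a c \<le> star b c) \<and>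
     (\<forall>a\<ge>0. star a 0 = a) \<and>
     (\<forall>b\<ge>0. continuous_on {0..} (\<lambda>a. star a b))"

definition star_metric :: "(real \<Rightarrow> real \<Rightarrow> real) \<Rightarrow> 'a set \<Rightarrow> ('a \<Rightarrow> 'a \<Rightarrow> real) \<Rightarrow> bool" where
  "star_metric star Y \<rho> \<longleftrightarrow>
     (\<forall>x\<in>Y. \<forall>y\<in>Y. \<rho> x y \<ge> 0) \<and>
     (\<forall>x\<in>Y. \<forall>y\<in>Y. \<rho> x y = 0 \<longleftrightarrow> x = y) \<and>
     (\<forall>x\<in>Y. \<forall>y\<in>Y. \<rho> x y = \<rho> y x) \<and>
     (\<forall>x\<in>Y. \<forall>y\<in>Y. \<forall>z\<in>Y. \<rho> x y \<le> star (\<rho> x z) (\<rho> z y))"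

definition star_totally_bounded :: "'a set \<Rightarrow> ('a \<Rightarrow> 'a \<Rightarrow> real) \<Rightarrow> bool" where
  "star_totally_bounded Y \<rho> \<longleftrightarrow>
     (\<forall>\<epsilon>>0. \<exists>F. finite F \<and> F \<subseteq> Y \<and> Y = (\<Union>x\<in>F. {y\<in>Y. \<rho> x y < \<epsilon>}))"

fun star_iter :: "(real \<Rightarrow> real \<Rightarrow> real) \<Rightarrow> (nat \<Rightarrow> real) \<Rightarrow> nat \<Rightarrow> real" where
  "star_iter star a 0 = 0"
| "star_iter star a (Suc 0) = a 1"
| "star_iter star a (Suc (Suc k)) = star (star_iter star a (Suc k)) (a (Suc (Suc k)))"

definition dT :: "(real \<Rightarrow> real \<Rightarrow> real) \<Rightarrow> nat \<Rightarrow> (nat \<Rightarrow> 'a \<Rightarrow> 'a \<Rightarrow> real)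
                   \<Rightarrow> (nat \<Rightarrow> 'a) \<Rightarrow> (nat \<Rightarrow> 'a) \<Rightarrow> real" where
  "dT star n d x y = star_iter star (\<lambda>i. d i (x i) (y i)) n"

definition dmax :: "nat \<Rightarrow> (nat \<Rightarrow> 'a \<Rightarrow> 'a \<Rightarrow> real) \<Rightarrow> (nat \<Rightarrow> 'a) \<Rightarrow> (nat \<Rightarrow> 'a) \<Rightarrow> real" where
  "dmax n d x y = Max ((\<lambda>i. d i (x i) (y i)) ` {1..n})"

end

theory Submission
  imports Defs
begin

lemma tb_prod_generic:
  fixes M :: "(nat \<Rightarrow> 'a) \<Rightarrow> (nat \<Rightarrow> 'a) \<Rightarrow> real"
  assumes ne: "\<And>i. i \<in> {1..n} \<Longrightarrow> X i \<noteq> {}"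
    and coord: "\<And>x y i. x \<in> PiE {1..n} X \<Longrightarrow> y \<in> PiE {1..n} X \<Longrightarrow> i \<in> {1..n}
                 \<Longrightarrow> d i (x i) (y i) \<le> M x y"
    and cont: "\<And>\<epsilon>. \<epsilon> > 0 \<Longrightarrow> \<exists>\<delta>>0. \<forall>x\<in>PiE {1..n} X. \<forall>y\<in>PiE {1..n} X.
                 (\<forall>i\<in>{1..n}. d i (x i) (y i) < \<delta>) \<longrightarrow> M x y < \<epsilon>"
  shows "star_totally_bounded (PiE {1..n} X) M \<longleftrightarrow> (\<forall>i\<in>{1..n}. star_totally_bounded (X i) (d i))"
proof
  assume tb: "star_totally_bounded (PiE {1..n} X) M"
  show "\<forall>i\<in>{1..n}. star_totally_bounded (X i) (d i)"
  proof (intro ballI)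
    fix i assume i: "i \<in> {1..n}"
    show "star_totally_bounded (X i) (d i)"
      unfolding star_totally_bounded_def
    proof (intro allI impI)
      fix \<epsilon> :: real assume e: "\<epsilon> > 0"
      obtain F where F: "finite F" "F \<subseteq> PiE {1..n} X"
        "PiE {1..n} X = (\<Union>x\<in>F. {y\<in>PiE {1..n} X. M x y < \<epsilon>})"
        using tb e unfolding star_totally_bounded_def by meson
      let ?G = "(\<lambda>x. x i) ` F"
      have "finite ?G" using F by simp
      moreover have "?G \<subseteq> X i" using F i by (auto simp: PiE_iff)
      moreover have "X i \<subseteq> (\<Union>x\<in>?G. {y\<in>X i. d i x y < \<epsilon>})"
      proof
        fix z assume z: "z \<in> X i"
        define y where "y = restrict (\<lambda>j. if j = i then z else SOME w. w \<in> X j) {1..n}"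
        have y: "y \<in> PiE {1..n} X"
          unfolding y_def using z ne by (auto simp: PiE_iff some_in_eq)
        have yi: "y i = z" using i by (simp add: y_def)
        obtain x where x: "x \<in> F" "M x y < \<epsilon>" using F(3) y by blast
        have "d i (x i) (y i) \<le> M x y" using coord[of x y i] F(2) x y i by blast
        then show "z \<in> (\<Union>x\<in>?G. {y\<in>X i. d i x y < \<epsilon>})" using x z yi by force
      qed
      ultimately show "\<exists>F. finite F \<and> F \<subseteq> X i \<and> X i = (\<Union>x\<in>F. {y \<in> X i. d i x y < \<epsilon>})"
        by blast
    qed
  qed
next
  assume all: "\<forall>i\<in>{1..n}. star_totally_bounded (X i) (d i)"
  show "star_totally_bounded (PiE {1..n} X) M"
    unfolding star_totally_bounded_def
  proof (intro allI impI)
    fix \<epsilon> :: real assume e: "\<epsilon> > 0"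
    obtain \<delta> where dl: "\<delta> > 0" and dlp: "\<forall>x\<in>PiE {1..n} X. \<forall>y\<in>PiE {1..n} X.
                 (\<forall>i\<in>{1..n}. d i (x i) (y i) < \<delta>) \<longrightarrow> M x y < \<epsilon>"
      using cont[OF e] by blast
    have "\<forall>i\<in>{1..n}. \<exists>F. finite F \<and> F \<subseteq> X i \<and> X i = (\<Union>x\<in>F. {y \<in> X i. d i x y < \<delta>})"
      using all dl unfolding star_totally_bounded_def by blast
    from bchoice[OF this] obtain Fs where Fs0: "\<forall>i\<in>{1..n}. finite (Fs i) \<and> Fs i \<subseteq> X i \<and>
        X i = (\<Union>x\<in>Fs i. {y \<in> X i. d i x y < \<delta>})"
      by blast
    have Fs: "finite (Fs i) \<and> Fs i \<subseteq> X i \<and>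
        X i = (\<Union>x\<in>Fs i. {y \<in> X i. d i x y < \<delta>})" if "i \<in> {1..n}" for i
      using Fs0 that by blast
    let ?F = "PiE {1..n} Fs"
    have "finite ?F" using Fs by (intro finite_PiE) auto
    moreover have "?F \<subseteq> PiE {1..n} X" using Fs by (intro PiE_mono) auto
    moreover have "PiE {1..n} X \<subseteq> (\<Union>x\<in>?F. {y\<in>PiE {1..n} X. M x y < \<epsilon>})"
    proof
      fix y assume y: "y \<in> PiE {1..n} X"
      have "\<forall>i\<in>{1..n}. \<exists>x. x \<in> Fs i \<and> d i x (y i) < \<delta>"
      proof
        fix i assume i: "i \<in> {1..n}"
        have "y i \<in> X i" using y i by (auto simp: PiE_iff)
        then show "\<exists>x. x \<in> Fs i \<and> d i x (y i) < \<delta>" using Fs[OF i] by blast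
      qed
      from bchoice[OF this] obtain g where g0: "\<forall>i\<in>{1..n}. g i \<in> Fs i \<and> d i (g i) (y i) < \<delta>"
        by blast
      have g: "g i \<in> Fs i \<and> d i (g i) (y i) < \<delta>" if "i \<in> {1..n}" for i
        using g0 that by blast
      define x where "x = restrict g {1..n}"
      have xF: "x \<in> ?F" using g by (auto simp: x_def)
      have xX: "x \<in> PiE {1..n} X" using xF \<open>?F \<subseteq> PiE {1..n} X\<close> by blast
      have "M x y < \<epsilon>" using dlp xX y g by (auto simp: x_def)
      then show "y \<in> (\<Union>x\<in>?F. {y\<in>PiE {1..n} X. M x y < \<epsilon>})" using xF y by blast
    qed
    ultimately show "\<exists>F. finite F \<and> F \<subseteq> PiE {1..n} X \<and>
        PiE {1..n} X = (\<Union>x\<in>F. {y\<in>PiE {1..n} X. M x y < \<epsilon>})"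
      by blast
  qed
qed

lemma ind2[case_names zero one step]:
  assumes "P 0" "P (Suc 0)" "\<And>k. P (Suc k) \<Longrightarrow> P (Suc (Suc k))"
  shows "P k"
proof -
  have "P k \<and> P (Suc k)"
  proof (induction k)
    case 0
    then show ?case using assms(1,2) by blast
  next
    case (Suc k)
    then show ?case using assms(3)[of k] by blast
  qed
  then show ?thesis by blast
qed

context
  fixes star :: "real \<Rightarrow> real \<Rightarrow> real"
  assumes td: "t_definer star"
begin

lemma td_p1: "\<forall>a\<ge>0. \<forall>b\<ge>0. star a b \<ge> 0"
  using td unfolding t_definer_def by (elim conjE) assumption

lemma td_p2: "\<forall>a\<ge>0. \<forall>b\<ge>0. star a b = star b a"
  using td unfolding t_definer_def by (elim conjE) assumption

lemma td_p3: "\<forall>a\<ge>0. \<forall>b\<ge>0. \<forall>c\<ge>0. a \<le> b \<longrightarrow> star a c \<le> star b c"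
  using td unfolding t_definer_def by (elim conjE) assumption

lemma td_p4: "\<forall>a\<ge>0. star a 0 = a"
  using td unfolding t_definer_def by (elim conjE) assumption

lemma td_p5: "\<forall>b\<ge>0. continuous_on {0..} (\<lambda>a. star a b)"
  using td unfolding t_definer_def by (elim conjE) assumption

lemma st_nonneg: "a \<ge> 0 \<Longrightarrow> b \<ge> 0 \<Longrightarrow> star a b \<ge> 0"
  using td_p1 by blast

lemma st_mono1: "a \<ge> 0 \<Longrightarrow> b \<ge> 0 \<Longrightarrow> c \<ge> 0 \<Longrightarrow> a \<le> b \<Longrightarrow> star a c \<le> star b c"
  using td_p3 by blast

lemma st_comm: "a \<ge> 0 \<Longrightarrow> b \<ge> 0 \<Longrightarrow> star a b = star b a"
  using td_p2 by blast

lemma st_zero: "a \<ge> 0 \<Longrightarrow> star a 0 = a"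
  using td_p4 by blast

lemma st_cont: "b \<ge> 0 \<Longrightarrow> continuous_on {0..} (\<lambda>a. star a b)"
  using td_p5 by blast

lemma st_mono2: "a \<ge> 0 \<Longrightarrow> b \<ge> 0 \<Longrightarrow> c \<ge> 0 \<Longrightarrow> b \<le> c \<Longrightarrow> star a b \<le> star a c"
  using st_mono1[of b c a] st_comm[of a b] st_comm[of a c] by linarith

lemma st_mono: "0 \<le> a \<Longrightarrow> a \<le> a' \<Longrightarrow> 0 \<le> b \<Longrightarrow> b \<le> b' \<Longrightarrow> star a b \<le> star a' b'"
  using st_mono1[of a a' b] st_mono2[of a' b b'] by linarith

lemma st_ge1: "a \<ge> 0 \<Longrightarrow> b \<ge> 0 \<Longrightarrow> a \<le> star a b"
  using st_mono2[of a 0 b] st_zero[of a] by simp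

lemma st_ge2: "a \<ge> 0 \<Longrightarrow> b \<ge> 0 \<Longrightarrow> b \<le> star a b"
  using st_ge1[of b a] st_comm[of a b] by simp

lemma si_nonneg: "(\<And>j. j \<in> {1..k} \<Longrightarrow> a j \<ge> 0) \<Longrightarrow> star_iter star a k \<ge> 0"
proof (induction k rule: ind2)
  case zero
  then show ?case by simp
next
  case one
  then show ?case by simp
next
  case (step k)
  have "star_iter star a (Suc k) \<ge> 0" using step.IH step.prems by simp
  moreover have "a (Suc (Suc k)) \<ge> 0" using step.prems by simp
  ultimately show ?case by (simp add: st_nonneg)
qed

lemma si_coord: "(\<And>j. j \<in> {1..k} \<Longrightarrow> a j \<ge> 0) \<Longrightarrow> i \<in> {1..k} \<Longrightarrow> a i \<le> star_iter star a k"
proof (induction k rule: ind2)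
  case zero
  then show ?case by simp
next
  case one
  then have "i = 1" by simp
  then show ?case by simp
next
  case (step k)
  have nn: "star_iter star a (Suc k) \<ge> 0" using step.prems(1) by (intro si_nonneg) simp
  have an: "a (Suc (Suc k)) \<ge> 0" using step.prems(1) by simp
  show ?case
  proof (cases "i = Suc (Suc k)")
    case True
    then show ?thesis using nn an st_ge2 by simp
  next
    case False
    then have i: "i \<in> {1..Suc k}" using step.prems(2) by simp
    have "a i \<le> star_iter star a (Suc k)" using step.IH[OF _ i] step.prems(1) by simp
    also have "\<dots> \<le> star_iter star a (Suc (Suc k))" using an nn st_ge1 by simp
    finally show ?thesis .
  qed
qed

lemma si_mono: "(\<And>j. j \<in> {1..k} \<Longrightarrow> 0 \<le> a j \<and> a j \<le> b j) \<Longrightarrow> star_iter star a k \<le> star_iter star b k"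
proof (induction k rule: ind2)
  case zero
  then show ?case by simp
next
  case one
  then show ?case by simp
next
  case (step k)
  have nn: "star_iter star a (Suc k) \<ge> 0" using step.prems by (intro si_nonneg) simp
  have le: "star_iter star a (Suc k) \<le> star_iter star b (Suc k)" using step.IH step.prems by simp
  have ab: "0 \<le> a (Suc (Suc k)) \<and> a (Suc (Suc k)) \<le> b (Suc (Suc k))" using step.prems by simp
  show ?case using ab nn le by (simp add: st_mono)
qed

lemma si_small: "\<epsilon> > 0 \<Longrightarrow> \<exists>\<delta>>0. \<forall>a. (\<forall>j\<in>{1..Suc k}. 0 \<le> a j \<and> a j < \<delta>) \<longrightarrow> star_iter star a (Suc k) < \<epsilon>"
proof (induction k arbitrary: \<epsilon>)
  case 0
  then show ?case by (intro exI[of _ \<epsilon>]) auto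
next
  case (Suc k)
  define h where "h = \<epsilon> / 2"
  have h: "h > 0" "h < \<epsilon>" using Suc.prems by (auto simp: h_def)
  have c: "continuous_on {0..} (\<lambda>s. star s h)" using st_cont h by simp
  have s0: "star 0 h = h" using st_comm[of 0 h] st_zero[of h] h by simp
  obtain \<gamma> where g: "\<gamma> > 0" "\<forall>s\<in>{0..}. dist s 0 < \<gamma> \<longrightarrow> dist (star s h) (star 0 h) < \<epsilon> - h"
    using c[unfolded continuous_on_iff, rule_format, of 0 "\<epsilon> - h"] h by auto
  obtain \<delta>1 where d1: "\<delta>1 > 0" "\<forall>a. (\<forall>j\<in>{1..Suc k}. 0 \<le> a j \<and> a j < \<delta>1) \<longrightarrow> star_iter star a (Suc k) < \<gamma>"
    using Suc.IH[OF g(1)] by blast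
  show ?case
  proof (intro exI[of _ "min \<delta>1 h"] conjI allI impI)
    show "min \<delta>1 h > 0" using d1 h by simp
    fix a assume a: "\<forall>j\<in>{1..Suc (Suc k)}. 0 \<le> a j \<and> a j < min \<delta>1 h"
    have "star_iter star a (Suc k) < \<gamma>" using d1(2) a by auto
    moreover have nn: "star_iter star a (Suc k) \<ge> 0" using a by (intro si_nonneg) auto
    ultimately have "star (star_iter star a (Suc k)) h < \<epsilon>"
      using g(2) s0 by (auto simp: dist_real_def)
    moreover have "star (star_iter star a (Suc k)) (a (Suc (Suc k))) \<le> star (star_iter star a (Suc k)) h"
      using a[rule_format, of "Suc (Suc k)"] nn h by (intro st_mono2) auto
    ultimately show "star_iter star a (Suc (Suc k)) < \<epsilon>" by simp
  qed
qed

end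

theorem theorem3p7:
  fixes star :: "real \<Rightarrow> real \<Rightarrow> real"
    and n :: nat
    and X :: "nat \<Rightarrow> 'a set"
    and d :: "nat \<Rightarrow> 'a \<Rightarrow> 'a \<Rightarrow> real"
  assumes "t_definer star"
    and "n \<ge> 1"
    and "\<And>i. i \<in> {1..n} \<Longrightarrow> X i \<noteq> {}"
    and "\<And>i. i \<in> {1..n} \<Longrightarrow> star_metric star (X i) (d i)"
  shows "(star_totally_bounded (PiE {1..n} X) (dT star n d)
            \<longleftrightarrow> (\<forall>i\<in>{1..n}. star_totally_bounded (X i) (d i)))
       \<and> (star_totally_bounded (PiE {1..n} X) (dmax n d)
            \<longleftrightarrow> (\<forall>i\<in>{1..n}. star_totally_bounded (X i) (d i)))"
proof -
  note td = assms(1)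
  have dnn: "d j (x j) (y j) \<ge> 0" if "x \<in> PiE {1..n} X" "y \<in> PiE {1..n} X" "j \<in> {1..n}" for x y j
  proof -
    have "x j \<in> X j" "y j \<in> X j" using that by (auto simp: PiE_iff)
    moreover have "\<forall>x\<in>X j. \<forall>y\<in>X j. d j x y \<ge> 0"
      using assms(4)[OF that(3)] unfolding star_metric_def by (elim conjE) assumption
    ultimately show ?thesis by blast
  qed
  obtain k where k: "n = Suc k" using assms(2) by (cases n) auto
  have A: "star_totally_bounded (PiE {1..n} X) (dT star n d)
            \<longleftrightarrow> (\<forall>i\<in>{1..n}. star_totally_bounded (X i) (d i))"
  proof (rule tb_prod_generic[OF assms(3)])
    fix x y i assume xy: "x \<in> PiE {1..n} X" "y \<in> PiE {1..n} X" and i: "i \<in> {1..n}"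
    show "d i (x i) (y i) \<le> dT star n d x y"
      unfolding dT_def by (rule si_coord[OF td, of n "\<lambda>i. d i (x i) (y i)" i]) (use dnn[OF xy] i in auto)
  next
    fix \<epsilon> :: real assume e: "\<epsilon> > 0"
    obtain \<delta> where dl: "\<delta> > 0" "\<forall>a. (\<forall>j\<in>{1..Suc k}. 0 \<le> a j \<and> a j < \<delta>) \<longrightarrow> star_iter star a (Suc k) < \<epsilon>"
      using si_small[OF td e, of k] by blast
    show "\<exists>\<delta>>0. \<forall>x\<in>PiE {1..n} X. \<forall>y\<in>PiE {1..n} X.
                 (\<forall>i\<in>{1..n}. d i (x i) (y i) < \<delta>) \<longrightarrow> dT star n d x y < \<epsilon>"
    proof (intro exI[of _ \<delta>] conjI ballI impI)
      fix x y assume xy: "x \<in> PiE {1..n} X" "y \<in> PiE {1..n} X"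
        and lt: "\<forall>i\<in>{1..n}. d i (x i) (y i) < \<delta>"
      have "\<forall>j\<in>{1..Suc k}. 0 \<le> d j (x j) (y j) \<and> d j (x j) (y j) < \<delta>"
        using lt dnn[OF xy] k by simp
      then show "dT star n d x y < \<epsilon>" unfolding dT_def k using dl(2)[rule_format, of "\<lambda>i. d i (x i) (y i)"] by simp
    qed (use dl in simp)
  qed
  have B: "star_totally_bounded (PiE {1..n} X) (dmax n d)
            \<longleftrightarrow> (\<forall>i\<in>{1..n}. star_totally_bounded (X i) (d i))"
  proof (rule tb_prod_generic[OF assms(3)])
    fix x y i assume xy: "x \<in> PiE {1..n} X" "y \<in> PiE {1..n} X" and i: "i \<in> {1..n}"
    show "d i (x i) (y i) \<le> dmax n d x y"
      unfolding dmax_def using i by (intro Max_ge) auto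
  next
    fix \<epsilon> :: real assume e: "\<epsilon> > 0"
    have ne: "{1..n} \<noteq> {}" using assms(2) by simp
    show "\<exists>\<delta>>0. \<forall>x\<in>PiE {1..n} X. \<forall>y\<in>PiE {1..n} X.
                 (\<forall>i\<in>{1..n}. d i (x i) (y i) < \<delta>) \<longrightarrow> dmax n d x y < \<epsilon>"
      unfolding dmax_def using e ne by (intro exI[of _ \<epsilon>]) (simp add: Max_less_iff)
  qed
  show ?thesis using A B by blast
qed

end
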